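(* For every $s\in[0,1]$, $$\{(g(s,x),h(s,x)):x\in[a,b]\}=\{(x,w(x)+s\varphi(x)):x\in[a,b]\}.$$
   Context: Let $w\in C^3(\mathbb R)$ be periodic with $w>0$ on $[-1,1]$. Let $-1<a<b<1$ and let $\varphi:[a,b]\to\mathbb R$ be a polynomial with $\varphi^{(k)}(a)=\varphi^{(k)}(b)=0$ for $k=0,1,2,3$, extended by zero outside $[a,b]$. For $x\in\mathbb R$, $(\xi(t,x),\eta(t,x))$ is the unique global solution of $$\frac{d\xi}{dt}=-w'(\xi)\varphi(\xi)-(\eta-w(\xi))\varphi'(\xi),\quad\frac{d\eta}{dt}=\varphi(\xi),\quad \xi(0)=x,\ \eta(0)=w(x).$$ For $s\in[0,1]$, $t_0(s,x)\ge0$ denotes the first time $t\ge0$ with $\eta(t,x)=w(\xi(t,x))+s\varphi(\xi(t,x))$ (it exists). Set $g(s,x)=\xi(t_0(s,x),x)$ and $h(s,x)=\eta(t_0(s,x),x)$. *)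

theory Defs
  imports "HOL-Analysis.Analysis" "HOL-Computational_Algebra.Polynomial"
begin

definition C_k :: "nat \<Rightarrow> (real \<Rightarrow> real) \<Rightarrow> bool" where
  "C_k k f \<longleftrightarrow> (\<forall>j<k. \<forall>x. ((deriv ^^ j) f) differentiable (at x))
                  \<and> continuous_on UNIV ((deriv ^^ k) f)"

definition periodic_fun :: "(real \<Rightarrow> real) \<Rightarrow> bool" where
  "periodic_fun f \<longleftrightarrow> (\<exists>T>0. \<forall>x. f (x + T) = f x)"

definition ext_zero :: "real poly \<Rightarrow> real \<Rightarrow> real \<Rightarrow> real \<Rightarrow> real" where
  "ext_zero p a b x = (if a \<le> x \<and> x \<le> b then poly p x else 0)"

definition first_time ::
  "(real \<Rightarrow> real \<Rightarrow> real) \<Rightarrow> (real \<Rightarrow> real \<Rightarrow> real) \<Rightarrow> (real \<Rightarrow> real) \<Rightarrow> (real \<Rightarrow> real)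
    \<Rightarrow> real \<Rightarrow> real \<Rightarrow> real" where
  "first_time \<xi> \<eta> w \<phi> s x = Inf {t. 0 \<le> t \<and> \<eta> t x = w (\<xi> t x) + s * \<phi> (\<xi> t x)}"

end

theory Submission
  imports Defs
begin


lemma lipschitz_deriv:
  fixes f f' :: "real \<Rightarrow> real"
  assumes d: "\<And>x. (f has_real_derivative f' x) (at x)" and B: "\<And>x. \<bar>f' x\<bar> \<le> B"
  shows "\<bar>f x - f y\<bar> \<le> B * \<bar>x - y\<bar>"
proof -
  have *: "\<bar>f v - f u\<bar> \<le> B * \<bar>v - u\<bar>" if uv: "u < v" for u v
  proof -
    obtain z where "f v - f u = (v - u) * f' z" using MVT2[OF uv, of f f'] d by blast
    then have "\<bar>f v - f u\<bar> = \<bar>v - u\<bar> * \<bar>f' z\<bar>" by (simp add: abs_mult)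
    also have "\<dots> \<le> \<bar>v - u\<bar> * B" by (rule mult_left_mono[OF B]) simp
    finally show ?thesis by (simp add: mult.commute)
  qed
  consider "x < y" | "x = y" | "y < x" by linarith
  then show ?thesis
  proof cases
    case 1 then show ?thesis using *[OF 1] by (simp add: abs_minus_commute)
  next
    case 2 then show ?thesis by simp
  next
    case 3 then show ?thesis using *[OF 3] by simp
  qed
qed

lemma key_ineq:
  fixes p q A B L :: real
  assumes "L \<ge> 0" "\<bar>A\<bar> \<le> L * (\<bar>p\<bar> + \<bar>q\<bar>)" "\<bar>B\<bar> \<le> L * \<bar>p\<bar>"
  shows "\<bar>2*p*A + 2*q*B\<bar> \<le> 4*L*(p^2 + q^2)"
proof -
  have "\<bar>2*p*A + 2*q*B\<bar> \<le> 2*\<bar>p\<bar>*\<bar>A\<bar> + 2*\<bar>q\<bar>*\<bar>B\<bar>" by (simp add: abs_mult abs_triangle_ineq[THEN order_trans])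
  also have "\<dots> \<le> 2*\<bar>p\<bar>*(L * (\<bar>p\<bar> + \<bar>q\<bar>)) + 2*\<bar>q\<bar>*(L*\<bar>p\<bar>)"
    by (intro add_mono mult_left_mono assms) auto
  also have "\<dots> = 2*L*(\<bar>p\<bar>^2 + 2*\<bar>p\<bar>*\<bar>q\<bar>)" by (simp add: algebra_simps power2_eq_square)
  also have "\<dots> \<le> 2*L*(2*\<bar>p\<bar>^2 + \<bar>q\<bar>^2)"
  proof -
    have "2*\<bar>p\<bar>*\<bar>q\<bar> \<le> \<bar>p\<bar>^2 + \<bar>q\<bar>^2" using sum_squares_bound[of "\<bar>p\<bar>" "\<bar>q\<bar>"] by simp
    then show ?thesis using assms(1) by (intro mult_left_mono) auto
  qed
  also have "\<dots> \<le> 4*L*(p^2+q^2)" using assms(1) by (simp add: algebra_simps mult_left_mono)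
  finally show ?thesis .
qed

lemma gronwall2:
  fixes XA YA XB YB FB :: "real \<Rightarrow> real" and FA :: "real \<Rightarrow> real \<Rightarrow> real"
  assumes d1: "\<And>t. (XA has_real_derivative FA (XA t) (YA t)) (at t)"
    and e1: "\<And>t. (YA has_real_derivative FB (XA t)) (at t)"
    and d2: "\<And>t. (XB has_real_derivative FA (XB t) (YB t)) (at t)"
    and e2: "\<And>t. (YB has_real_derivative FB (XB t)) (at t)"
    and L: "L \<ge> 0"
    and lip1: "\<And>u1 v1 u2 v2. \<bar>v1\<bar> \<le> R \<Longrightarrow> \<bar>v2\<bar> \<le> R \<Longrightarrow> \<bar>FA u1 v1 - FA u2 v2\<bar> \<le> L*(\<bar>u1-u2\<bar> + \<bar>v1-v2\<bar>)"
    and lip2: "\<And>u1 u2. \<bar>FB u1 - FB u2\<bar> \<le> L*\<bar>u1-u2\<bar>"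
    and bnd: "\<And>t. 0 \<le> t \<Longrightarrow> t \<le> T \<Longrightarrow> \<bar>YA t\<bar> \<le> R \<and> \<bar>YB t\<bar> \<le> R"
    and t: "0 \<le> t" "t \<le> T"
  shows "(XA t - XB t)^2 + (YA t - YB t)^2 \<le> ((XA 0 - XB 0)^2 + (YA 0 - YB 0)^2) * exp (4*L*t)"
    and "((XA 0 - XB 0)^2 + (YA 0 - YB 0)^2) * exp (-(4*L*t)) \<le> (XA t - XB t)^2 + (YA t - YB t)^2"
proof -
  define D where "D = (\<lambda>t. (XA t - XB t)^2 + (YA t - YB t)^2)"
  define D' where "D' = (\<lambda>t. 2*(XA t - XB t)*(FA (XA t) (YA t) - FA (XB t) (YB t)) + 2*(YA t - YB t)*(FB (XA t) - FB (XB t)))"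
  have dD: "(D has_real_derivative D' t) (at t)" for t
    unfolding D_def D'_def
    by (auto intro!: derivative_eq_intros d1 d2 e1 e2 simp: algebra_simps)
  have bD: "\<bar>D' t\<bar> \<le> 4*L*D t" if "0 \<le> t" "t \<le> T" for t
    unfolding D_def D'_def
    by (rule key_ineq[OF L]) (use bnd[OF that] lip1 lip2 in auto)
  have Dnn: "D t \<ge> 0" for t unfolding D_def by simp
  have "D t * exp (-(4*L*t)) \<le> D 0 * exp (-(4*L*0))"
  proof (rule DERIV_nonpos_imp_nonincreasing[OF t(1), of "\<lambda>t. D t * exp (-(4*L*t))"])
    fix x assume x: "0 \<le> x" "x \<le> t"
    have "((\<lambda>t. D t * exp (-(4*L*t))) has_real_derivative (D' x * exp (-(4*L*x)) + D x * (exp (-(4*L*x)) * (-(4*L))))) (at x)"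
      by (auto intro!: derivative_eq_intros dD)
    moreover have "D' x * exp (-(4*L*x)) + D x * (exp (-(4*L*x)) * (-(4*L))) = (D' x - 4*L*D x) * exp (-(4*L*x))"
      by (simp add: algebra_simps)
    moreover have "D' x - 4*L*D x \<le> 0" using bD[of x] x t by auto
    ultimately show "\<exists>y. ((\<lambda>t. D t * exp (-(4*L*t))) has_real_derivative y) (at x) \<and> y \<le> 0"
      by (metis mult_nonpos_nonneg exp_ge_zero)
  qed
  then have "D t * exp (-(4*L*t)) \<le> D 0" by simp
  then have "D t * exp (-(4*L*t)) * exp (4*L*t) \<le> D 0 * exp (4*L*t)" by (simp add: mult_right_mono)
  then show "D t \<le> D 0 * exp (4*L*t)" by (simp add: mult.assoc exp_minus_inverse[symmetric] exp_add[symmetric])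
  have "D 0 * exp (4*L*0) \<le> D t * exp (4*L*t)"
  proof (rule DERIV_nonneg_imp_nondecreasing[OF t(1), of "\<lambda>t. D t * exp (4*L*t)"])
    fix x assume x: "0 \<le> x" "x \<le> t"
    have "((\<lambda>t. D t * exp (4*L*t)) has_real_derivative (D' x * exp (4*L*x) + D x * (exp (4*L*x) * (4*L)))) (at x)"
      by (auto intro!: derivative_eq_intros dD)
    moreover have "D' x * exp (4*L*x) + D x * (exp (4*L*x) * (4*L)) = (D' x + 4*L*D x) * exp (4*L*x)"
      by (simp add: algebra_simps)
    moreover have "D' x + 4*L*D x \<ge> 0" using bD[of x] x t by auto
    ultimately show "\<exists>y. ((\<lambda>t. D t * exp (4*L*t)) has_real_derivative y) (at x) \<and> y \<ge> 0"
      by (metis zero_le_mult_iff exp_ge_zero)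
  qed
  then have "D 0 \<le> D t * exp (4*L*t)" by simp
  then have "D 0 * exp (-(4*L*t)) \<le> D t * exp (4*L*t) * exp (-(4*L*t))" by (simp add: mult_right_mono)
  then show "D 0 * exp (-(4*L*t)) \<le> D t" by (simp add: mult.assoc exp_add[symmetric])
qed



lemma deriv_split:
  fixes f :: "real \<Rightarrow> real"
  assumes "(f has_real_derivative D) (at x within {..x})" "(f has_real_derivative D) (at x within {x..})"
  shows "(f has_real_derivative D) (at x)"
proof -
  have "{..x} \<union> {x..} = (UNIV::real set)" by auto
  then have "at x = at x within ({..x} \<union> {x..})" by simp
  then show ?thesis using assms unfolding has_field_derivative_iff
    by (simp only: Lim_within_Un)
qed

lemma ext_zero_deriv:
  fixes q :: "real poly"
  assumes ab: "a < b" and q: "poly q a = 0" "poly q b = 0" "poly (pderiv q) a = 0" "poly (pderiv q) b = 0"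
  shows "(ext_zero q a b has_real_derivative ext_zero (pderiv q) a b x) (at x)"
proof -
  have P: "\<And>y. (poly q has_real_derivative poly (pderiv q) y) (at y)" by (rule poly_DERIV)
  consider "x < a" | "x = a" | "a < x \<and> x < b" | "x = b" | "b < x" by linarith
  then show ?thesis
  proof cases
    case 1
    have "((\<lambda>_. 0) has_real_derivative 0) (at x)" by simp
    from has_field_derivative_transform_within_open[OF this, of "{..<a}"] 1
    show ?thesis by (auto simp: ext_zero_def)
  next
    case 5
    have "((\<lambda>_. 0) has_real_derivative 0) (at x)" by simp
    from has_field_derivative_transform_within_open[OF this, of "{b<..}"] 5 ab
    show ?thesis by (auto simp: ext_zero_def)
  next
    case 3
    from has_field_derivative_transform_within_open[OF P[of x], of "{a<..<b}"] 3
    show ?thesis by (auto simp: ext_zero_def)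
  next
    case 2
    have v: "ext_zero (pderiv q) a b x = 0" using 2 q ab by (simp add: ext_zero_def)
    show ?thesis unfolding v
    proof (rule deriv_split)
      have "((\<lambda>_. 0) has_real_derivative 0) (at x within {..x})" by simp
      then show "(ext_zero q a b has_real_derivative 0) (at x within {..x})"
        by (rule has_field_derivative_transform_within[where d=1]) (use 2 q in \<open>auto simp: ext_zero_def\<close>)
      have "(poly q has_real_derivative 0) (at x within {x..})"
        using has_field_derivative_at_within[OF P[of x]] 2 q by simp
      then show "(ext_zero q a b has_real_derivative 0) (at x within {x..})"
        by (rule has_field_derivative_transform_within[where d="b-a"]) (use 2 ab in \<open>auto simp: ext_zero_def dist_real_def\<close>)
    qed
  next
    case 4
    have v: "ext_zero (pderiv q) a b x = 0" using 4 q ab by (simp add: ext_zero_def)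
    show ?thesis unfolding v
    proof (rule deriv_split)
      have "((\<lambda>_. 0) has_real_derivative 0) (at x within {x..})" by simp
      then show "(ext_zero q a b has_real_derivative 0) (at x within {x..})"
        by (rule has_field_derivative_transform_within[where d=1]) (use 4 q in \<open>auto simp: ext_zero_def\<close>)
      have "(poly q has_real_derivative 0) (at x within {..x})"
        using has_field_derivative_at_within[OF P[of x]] 4 q by simp
      then show "(ext_zero q a b has_real_derivative 0) (at x within {..x})"
        by (rule has_field_derivative_transform_within[where d="b-a"]) (use 4 ab in \<open>auto simp: ext_zero_def dist_real_def\<close>)
    qed
  qed
qed



lemma bounded_supp:
  fixes f :: "real \<Rightarrow> real"
  assumes "\<And>x. isCont f x" "\<And>x. x \<notin> {a..b} \<Longrightarrow> f x = 0" "a \<le> b"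
  obtains B where "B \<ge> 0" "\<And>x. \<bar>f x\<bar> \<le> B"
proof -
  have "continuous_on {a..b} (\<lambda>x. \<bar>f x\<bar>)"
    using assms(1) by (intro continuous_at_imp_continuous_on) (auto intro!: continuous_intros)
  then obtain m where m: "m \<in> {a..b}" "\<And>y. y \<in> {a..b} \<Longrightarrow> \<bar>f y\<bar> \<le> \<bar>f m\<bar>"
    using continuous_attains_sup[of "{a..b}" "\<lambda>x. \<bar>f x\<bar>"] assms(3) by auto
  show ?thesis
    by (rule that[of "\<bar>f m\<bar>"]) (use m assms(2) in \<open>force+\<close>)
qed

locale flow =
  fixes w :: "real \<Rightarrow> real" and p :: "real poly" and a b :: real
    and \<xi> \<eta> :: "real \<Rightarrow> real \<Rightarrow> real"
  assumes w_C3: "C_k 3 w"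
    and ab: "-1 < a" "a < b" "b < 1"
    and p_a: "\<forall>k\<le>3. poly ((pderiv ^^ k) p) a = 0"
    and p_b: "\<forall>k\<le>3. poly ((pderiv ^^ k) p) b = 0"
    and xi_ode: "\<forall>x t. ((\<lambda>t. \<xi> t x) has_real_derivative
          (- deriv w (\<xi> t x) * ext_zero p a b (\<xi> t x)
           - (\<eta> t x - w (\<xi> t x)) * deriv (ext_zero p a b) (\<xi> t x))) (at t)"
    and eta_ode: "\<forall>x t. ((\<lambda>t. \<eta> t x) has_real_derivative ext_zero p a b (\<xi> t x)) (at t)"
    and init: "\<forall>x. \<xi> 0 x = x \<and> \<eta> 0 x = w x"
begin

definition "phi = ext_zero p a b"
definition "phi1 = ext_zero (pderiv p) a b"
definition "phi2 = ext_zero (pderiv (pderiv p)) a b"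
definition "w1 = deriv w"
definition "w2 = deriv (deriv w)"
definition "F1 = (\<lambda>u v. - w1 u * phi u - (v - w u) * phi1 u)"

lemma pvan:
  "poly p a = 0" "poly p b = 0" "poly (pderiv p) a = 0" "poly (pderiv p) b = 0"
  "poly (pderiv (pderiv p)) a = 0" "poly (pderiv (pderiv p)) b = 0"
  "poly (pderiv (pderiv (pderiv p))) a = 0" "poly (pderiv (pderiv (pderiv p))) b = 0"
  using p_a[rule_format, of 0] p_b[rule_format, of 0] p_a[rule_format, of 1] p_b[rule_format, of 1]
    p_a[rule_format, of 2] p_b[rule_format, of 2] p_a[rule_format, of 3] p_b[rule_format, of 3]
  by (simp_all add: numeral_eq_Suc)

lemma dphi: "(phi has_real_derivative phi1 x) (at x)"
  unfolding phi_def phi1_def using ext_zero_deriv[of a b p] ab pvan by simp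
lemma dphi1: "(phi1 has_real_derivative phi2 x) (at x)"
  unfolding phi2_def phi1_def using ext_zero_deriv[of a b "pderiv p"] ab pvan by simp
lemma dphi2: "(phi2 has_real_derivative ext_zero (pderiv (pderiv (pderiv p))) a b x) (at x)"
  unfolding phi2_def using ext_zero_deriv[of a b "pderiv (pderiv p)"] ab pvan by simp

lemma cphi: "isCont phi x" using dphi by (rule DERIV_isCont)
lemma cphi1: "isCont phi1 x" using dphi1 by (rule DERIV_isCont)
lemma cphi2: "isCont phi2 x" using dphi2 by (rule DERIV_isCont)

lemma out0: "x \<notin> {a..b} \<Longrightarrow> phi x = 0" "x \<notin> {a..b} \<Longrightarrow> phi1 x = 0" "x \<notin> {a..b} \<Longrightarrow> phi2 x = 0"
  by (auto simp: phi_def phi1_def phi2_def ext_zero_def)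

lemma dw: "(w has_real_derivative w1 x) (at x)"
  and dw1: "(w1 has_real_derivative w2 x) (at x)"
  and cw2: "isCont w2 x"
proof -
  have d: "\<forall>j<3. \<forall>x. ((deriv ^^ j) w) differentiable (at x)" using w_C3 by (simp add: C_k_def)
  have "w differentiable (at x)" using d[rule_format, of 0] by simp
  then show "(w has_real_derivative w1 x) (at x)" unfolding w1_def
    by (simp add: DERIV_deriv_iff_real_differentiable)
  have "(deriv w) differentiable (at x)" using d[rule_format, of 1] by simp
  then show "(w1 has_real_derivative w2 x) (at x)" unfolding w1_def w2_def
    by (simp add: DERIV_deriv_iff_real_differentiable)
  have "(deriv (deriv w)) differentiable (at x)" using d[rule_format, of 2] by (simp add: numeral_eq_Suc)
  then show "isCont w2 x" unfolding w2_def by (rule differentiable_imp_continuous_within)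
qed

lemma cw: "isCont w x" using dw by (rule DERIV_isCont)
lemma cw1: "isCont w1 x" using dw1 by (rule DERIV_isCont)

lemma xi_d: "((\<lambda>t. \<xi> t x) has_real_derivative F1 (\<xi> t x) (\<eta> t x)) (at t)"
proof -
  have "deriv (ext_zero p a b) y = phi1 y" for y using dphi[of y] unfolding phi_def
    by (rule DERIV_imp_deriv)
  then show ?thesis using xi_ode by (simp add: F1_def w1_def phi_def)
qed

lemma eta_d: "((\<lambda>t. \<eta> t x) has_real_derivative phi (\<xi> t x)) (at t)"
  using eta_ode by (simp add: phi_def)

lemma xi_c: "isCont (\<lambda>t. \<xi> t x) t" using xi_d by (rule DERIV_isCont)
lemma eta_c: "isCont (\<lambda>t. \<eta> t x) t" using eta_d by (rule DERIV_isCont)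

end


context flow begin

lemma consts_exist:
  obtains L R where "L \<ge> 0" "R \<ge> 0"
    "\<And>u1 v1 u2 v2. \<bar>v1\<bar> \<le> R \<Longrightarrow> \<bar>v2\<bar> \<le> R \<Longrightarrow> \<bar>F1 u1 v1 - F1 u2 v2\<bar> \<le> L*(\<bar>u1-u2\<bar> + \<bar>v1-v2\<bar>)"
    "\<And>u1 u2. \<bar>phi u1 - phi u2\<bar> \<le> L*\<bar>u1-u2\<bar>"
    "\<And>x t. x \<in> {a..b} \<Longrightarrow> 0 \<le> t \<Longrightarrow> t \<le> 2 \<Longrightarrow> \<bar>\<eta> t x\<bar> \<le> R"
    "\<And>c. c \<in> {a..b} \<Longrightarrow> \<bar>w c\<bar> \<le> R"
proof -
  have ab': "a \<le> b" using ab by simp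
  obtain M0 where M0: "M0 \<ge> 0" "\<And>x. \<bar>phi x\<bar> \<le> M0"
    using bounded_supp[OF cphi out0(1) ab'] by blast
  obtain M1 where M1: "M1 \<ge> 0" "\<And>x. \<bar>phi1 x\<bar> \<le> M1"
    using bounded_supp[OF cphi1 out0(2) ab'] by blast
  obtain M2 where M2: "M2 \<ge> 0" "\<And>x. \<bar>phi2 x\<bar> \<le> M2"
    using bounded_supp[OF cphi2 out0(3) ab'] by blast
  obtain Bg where Bg: "Bg \<ge> 0" "\<And>x. \<bar>w2 x * phi x + w1 x * phi1 x\<bar> \<le> Bg"
  proof (rule bounded_supp[of "\<lambda>x. w2 x * phi x + w1 x * phi1 x" a b])
    show "isCont (\<lambda>x. w2 x * phi x + w1 x * phi1 x) x" for x by (intro continuous_intros cw2 cphi cw1 cphi1)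
  qed (use ab' out0 in auto)
  obtain Bk where Bk: "Bk \<ge> 0" "\<And>x. \<bar>w1 x * phi1 x + w x * phi2 x\<bar> \<le> Bk"
  proof (rule bounded_supp[of "\<lambda>x. w1 x * phi1 x + w x * phi2 x" a b])
    show "isCont (\<lambda>x. w1 x * phi1 x + w x * phi2 x) x" for x by (intro continuous_intros cw cphi2 cw1 cphi1)
  qed (use ab' out0 in auto)
  have "continuous_on {a..b} (\<lambda>x. \<bar>w x\<bar>)"
    by (intro continuous_at_imp_continuous_on) (auto intro!: continuous_intros cw)
  then obtain m where m: "m \<in> {a..b}" "\<And>y. y \<in> {a..b} \<Longrightarrow> \<bar>w y\<bar> \<le> \<bar>w m\<bar>"
    using continuous_attains_sup[of "{a..b}" "\<lambda>x. \<bar>w x\<bar>"] ab' by auto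
  define R where "R = \<bar>w m\<bar> + 2*M0"
  have lg: "\<bar>w1 u1 * phi u1 - w1 u2 * phi u2\<bar> \<le> Bg * \<bar>u1 - u2\<bar>" for u1 u2
    by (rule lipschitz_deriv[where f'="\<lambda>x. w2 x * phi x + w1 x * phi1 x", OF _ Bg(2)]) (auto intro!: derivative_eq_intros dw1 dphi simp: algebra_simps)
  have lk: "\<bar>w u1 * phi1 u1 - w u2 * phi1 u2\<bar> \<le> Bk * \<bar>u1 - u2\<bar>" for u1 u2
    by (rule lipschitz_deriv[where f'="\<lambda>x. w1 x * phi1 x + w x * phi2 x", OF _ Bk(2)]) (auto intro!: derivative_eq_intros dw dphi1 simp: algebra_simps)
  have l1: "\<bar>phi1 u1 - phi1 u2\<bar> \<le> M2 * \<bar>u1 - u2\<bar>" for u1 u2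
    by (rule lipschitz_deriv[OF dphi1 M2(2)])
  have l0: "\<bar>phi u1 - phi u2\<bar> \<le> M1 * \<bar>u1 - u2\<bar>" for u1 u2
    by (rule lipschitz_deriv[OF dphi M1(2)])
  define L where "L = Bg + R*M2 + M1 + Bk"
  have R0: "R \<ge> 0" using M0 by (simp add: R_def)
  have L0: "L \<ge> 0" using Bg Bk M1 M2 R0 by (simp add: L_def)
  show ?thesis
  proof (rule that[OF L0 R0])
    fix u1 v1 u2 v2 :: real assume v: "\<bar>v1\<bar> \<le> R" "\<bar>v2\<bar> \<le> R"
    have eq: "F1 u1 v1 - F1 u2 v2 = - (w1 u1 * phi u1 - w1 u2 * phi u2) - (v1 * (phi1 u1 - phi1 u2))
       - (v1 - v2) * phi1 u2 + (w u1 * phi1 u1 - w u2 * phi1 u2)"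
      by (simp add: F1_def algebra_simps)
    have t1: "\<bar>F1 u1 v1 - F1 u2 v2\<bar> \<le> \<bar>w1 u1 * phi u1 - w1 u2 * phi u2\<bar> + \<bar>v1 * (phi1 u1 - phi1 u2)\<bar>
       + \<bar>(v1 - v2) * phi1 u2\<bar> + \<bar>w u1 * phi1 u1 - w u2 * phi1 u2\<bar>"
      unfolding eq by linarith
    have h1: "\<bar>v1 * (phi1 u1 - phi1 u2)\<bar> \<le> R * (M2 * \<bar>u1 - u2\<bar>)"
      unfolding abs_mult by (rule mult_mono[OF v(1) l1]) (use R0 in auto)
    have h2: "\<bar>(v1 - v2) * phi1 u2\<bar> \<le> \<bar>v1 - v2\<bar> * M1"
      unfolding abs_mult by (rule mult_left_mono[OF M1(2)]) simp
    have h3: "(Bg + R*M2 + Bk) * \<bar>u1 - u2\<bar> \<le> L * \<bar>u1 - u2\<bar>"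
      by (rule mult_right_mono) (use M1 in \<open>auto simp: L_def\<close>)
    have h4: "\<bar>v1 - v2\<bar> * M1 \<le> L * \<bar>v1 - v2\<bar>"
      using mult_right_mono[of M1 L "\<bar>v1 - v2\<bar>"] Bg Bk R0 M2 by (simp add: L_def mult.commute)
    have "\<bar>F1 u1 v1 - F1 u2 v2\<bar> \<le> (Bg + R*M2 + Bk) * \<bar>u1 - u2\<bar> + \<bar>v1 - v2\<bar> * M1"
      using t1 h1 h2 lg[of u1 u2] lk[of u1 u2] by (simp add: algebra_simps)
    also have "\<dots> \<le> L*(\<bar>u1-u2\<bar> + \<bar>v1-v2\<bar>)" using h3 h4 by (simp add: algebra_simps)
    finally show "\<bar>F1 u1 v1 - F1 u2 v2\<bar> \<le> L*(\<bar>u1-u2\<bar> + \<bar>v1-v2\<bar>)" .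
  next
    fix u1 u2 :: real
    have "\<bar>phi u1 - phi u2\<bar> \<le> M1 * \<bar>u1 - u2\<bar>" by (rule l0)
    also have "\<dots> \<le> L * \<bar>u1 - u2\<bar>" by (rule mult_right_mono) (use Bg Bk R0 M2 in \<open>auto simp: L_def\<close>)
    finally show "\<bar>phi u1 - phi u2\<bar> \<le> L*\<bar>u1-u2\<bar>" .
  next
    fix x t :: real assume x: "x \<in> {a..b}" and t: "0 \<le> t" "t \<le> 2"
    have "\<bar>\<eta> t x - \<eta> 0 x\<bar> \<le> M0 * \<bar>t - 0\<bar>"
      by (rule lipschitz_deriv[OF eta_d M0(2)])
    moreover have "\<eta> 0 x = w x" using init by simp
    moreover have "M0 * t \<le> M0 * 2" by (rule mult_left_mono) (use t M0 in auto)
    ultimately have "\<bar>\<eta> t x - w x\<bar> \<le> 2*M0" using t by simp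
    then show "\<bar>\<eta> t x\<bar> \<le> R" using m(2)[OF x] by (simp add: R_def)
  next
    fix c assume "c \<in> {a..b}"
    then have "\<bar>w c\<bar> \<le> \<bar>w m\<bar>" by (rule m(2))
    then show "\<bar>w c\<bar> \<le> R" using M0 unfolding R_def by linarith
  qed
qed

end


context flow begin

lemma gron:
  obtains E where "E \<ge> 1"
  "\<And>x1 x2 t. x1\<in>{a..b} \<Longrightarrow> x2\<in>{a..b} \<Longrightarrow> 0 \<le> t \<Longrightarrow> t \<le> 2 \<Longrightarrow>
     (\<xi> t x1 - \<xi> t x2)^2 + (\<eta> t x1 - \<eta> t x2)^2 \<le> ((x1-x2)^2 + (w x1 - w x2)^2)*E"
  "\<And>x c t. x\<in>{a..b} \<Longrightarrow> c\<in>{a..b} \<Longrightarrow> phi c = 0 \<Longrightarrow> 0 \<le> t \<Longrightarrow> t \<le> 2 \<Longrightarrow>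
     (\<xi> t x - c)^2 + (\<eta> t x - w c)^2 \<le> ((x-c)^2 + (w x - w c)^2)*E"
  "\<And>x c t. x\<in>{a..b} \<Longrightarrow> c\<in>{a..b} \<Longrightarrow> phi c = 0 \<Longrightarrow> 0 \<le> t \<Longrightarrow> t \<le> 2 \<Longrightarrow>
     (x-c)^2 + (w x - w c)^2 \<le> ((\<xi> t x - c)^2 + (\<eta> t x - w c)^2)*E"
proof -
  obtain L R where L: "L \<ge> 0" "R \<ge> 0"
    "\<And>u1 v1 u2 v2. \<bar>v1\<bar> \<le> R \<Longrightarrow> \<bar>v2\<bar> \<le> R \<Longrightarrow> \<bar>F1 u1 v1 - F1 u2 v2\<bar> \<le> L*(\<bar>u1-u2\<bar> + \<bar>v1-v2\<bar>)"
    "\<And>u1 u2. \<bar>phi u1 - phi u2\<bar> \<le> L*\<bar>u1-u2\<bar>"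
    "\<And>x t. x \<in> {a..b} \<Longrightarrow> 0 \<le> t \<Longrightarrow> t \<le> 2 \<Longrightarrow> \<bar>\<eta> t x\<bar> \<le> R"
    "\<And>c. c \<in> {a..b} \<Longrightarrow> \<bar>w c\<bar> \<le> R"
    using consts_exist by blast
  define E where "E = exp (8*L)"
  have E1: "E \<ge> 1" using L(1) by (simp add: E_def)
  have eb: "exp (4*L*t) \<le> E" if "0 \<le> t" "t \<le> 2" for t
    unfolding E_def using that L(1) mult_left_mono[of t 2 L] by (simp add: mult.commute)
  show ?thesis
  proof (rule that[OF E1])
    fix x1 x2 t :: real assume x: "x1\<in>{a..b}" "x2\<in>{a..b}" and t: "0 \<le> t" "t \<le> 2"
    have "(\<xi> t x1 - \<xi> t x2)^2 + (\<eta> t x1 - \<eta> t x2)^2 \<le> ((\<xi> 0 x1 - \<xi> 0 x2)^2 + (\<eta> 0 x1 - \<eta> 0 x2)^2) * exp (4*L*t)"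
      by (rule gronwall2(1)[where XA="\<lambda>t. \<xi> t x1" and YA="\<lambda>t. \<eta> t x1" and XB="\<lambda>t. \<xi> t x2" and YB="\<lambda>t. \<eta> t x2"
            and FA=F1 and FB=phi and L=L and R=R and T=2, OF xi_d eta_d xi_d eta_d L(1) L(3) L(4) _ t])
        (use L(5) x in auto)
    also have "\<dots> \<le> ((x1-x2)^2 + (w x1 - w x2)^2) * E"
      using init eb[OF t] by (simp add: mult_left_mono)
    finally show "(\<xi> t x1 - \<xi> t x2)^2 + (\<eta> t x1 - \<eta> t x2)^2 \<le> ((x1-x2)^2 + (w x1 - w x2)^2)*E" .
  next
    fix x c t :: real assume x: "x\<in>{a..b}" "c\<in>{a..b}" "phi c = 0" and t: "0 \<le> t" "t \<le> 2"
    have F0: "F1 c (w c) = 0" using x(3) by (simp add: F1_def)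
    have dc: "((\<lambda>_. c) has_real_derivative F1 c (w c)) (at t)" for t unfolding F0 by simp
    have dwc: "((\<lambda>_. w c) has_real_derivative phi c) (at t)" for t unfolding x(3) by simp
    have "(\<xi> t x - c)^2 + (\<eta> t x - w c)^2 \<le> ((\<xi> 0 x - c)^2 + (\<eta> 0 x - w c)^2) * exp (4*L*t)"
      using gronwall2(1)[where XA="\<lambda>t. \<xi> t x" and YA="\<lambda>t. \<eta> t x" and XB="\<lambda>_. c" and YB="\<lambda>_. w c"
            and FA=F1 and FB=phi and L=L and R=R and T=2, OF xi_d eta_d dc dwc L(1) L(3) L(4) _ t]
        L(5) L(6) x by auto
    also have "\<dots> \<le> ((x-c)^2 + (w x - w c)^2) * E"
      using init eb[OF t] by (simp add: mult_left_mono)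
    finally show "(\<xi> t x - c)^2 + (\<eta> t x - w c)^2 \<le> ((x-c)^2 + (w x - w c)^2)*E" .
    have "((\<xi> 0 x - c)^2 + (\<eta> 0 x - w c)^2) * exp (-(4*L*t)) \<le> (\<xi> t x - c)^2 + (\<eta> t x - w c)^2"
      using gronwall2(2)[where XA="\<lambda>t. \<xi> t x" and YA="\<lambda>t. \<eta> t x" and XB="\<lambda>_. c" and YB="\<lambda>_. w c"
            and FA=F1 and FB=phi and L=L and R=R and T=2, OF xi_d eta_d dc dwc L(1) L(3) L(4) _ t]
        L(5) L(6) x by auto
    then have "((x-c)^2 + (w x - w c)^2) * exp (-(4*L*t)) * exp (4*L*t) \<le> ((\<xi> t x - c)^2 + (\<eta> t x - w c)^2) * exp (4*L*t)"
      using init by (simp add: mult_right_mono)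
    then have "(x-c)^2 + (w x - w c)^2 \<le> ((\<xi> t x - c)^2 + (\<eta> t x - w c)^2) * exp (4*L*t)"
      by (simp add: mult.assoc exp_add[symmetric])
    also have "\<dots> \<le> ((\<xi> t x - c)^2 + (\<eta> t x - w c)^2) * E"
      using eb[OF t] by (simp add: mult_left_mono)
    finally show "(x-c)^2 + (w x - w c)^2 \<le> ((\<xi> t x - c)^2 + (\<eta> t x - w c)^2)*E" .
  qed
qed

end


lemma left_limit_le:
  fixes f g :: "real \<Rightarrow> real"
  assumes "isCont f \<tau>" "isCont g \<tau>" "0 < \<tau>" "\<And>t. 0 < t \<Longrightarrow> t < \<tau> \<Longrightarrow> f t \<le> g t"
  shows "f \<tau> \<le> g \<tau>"
proof (rule tendsto_le[OF trivial_limit_at_left_real])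
  show "(g \<longlongrightarrow> g \<tau>) (at_left \<tau>)" using assms(2) unfolding isCont_def filterlim_at_split by simp
  show "(f \<longlongrightarrow> f \<tau>) (at_left \<tau>)" using assms(1) unfolding isCont_def filterlim_at_split by simp
  show "\<forall>\<^sub>F x in at_left \<tau>. f x \<le> g x"
    using eventually_at_left_real[OF assms(3)] by eventually_elim (use assms(4) in auto)
qed

context flow begin

definition "sig x t = (\<eta> t x - w (\<xi> t x)) / phi (\<xi> t x)"

lemma cxi: "isCont f (\<xi> t x) \<Longrightarrow> isCont (\<lambda>t. f (\<xi> t x)) t"
  by (rule isCont_o2[OF xi_c])

lemma sig0: "sig x 0 = 0" using init by (simp add: sig_def)

lemma sig_d:
  assumes P: "phi (\<xi> t x) \<noteq> 0"
  shows "((sig x) has_real_derivative 1 + (w1 (\<xi> t x) + sig x t * phi1 (\<xi> t x))^2) (at t)"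
proof -
  have hw: "((\<lambda>t. w (\<xi> t x)) has_real_derivative w1 (\<xi> t x) * F1 (\<xi> t x) (\<eta> t x)) (at t)"
    by (rule DERIV_chain2[OF dw xi_d])
  have hp: "((\<lambda>t. phi (\<xi> t x)) has_real_derivative phi1 (\<xi> t x) * F1 (\<xi> t x) (\<eta> t x)) (at t)"
    by (rule DERIV_chain2[OF dphi xi_d])
  have hz: "((\<lambda>t. \<eta> t x - w (\<xi> t x)) has_real_derivative phi (\<xi> t x) - w1 (\<xi> t x) * F1 (\<xi> t x) (\<eta> t x)) (at t)"
    using DERIV_diff[OF eta_d hw] .
  have "((\<lambda>t. (\<eta> t x - w (\<xi> t x)) / phi (\<xi> t x)) has_real_derivative
     ((phi (\<xi> t x) - w1 (\<xi> t x) * F1 (\<xi> t x) (\<eta> t x)) * phi (\<xi> t x) - (\<eta> t x - w (\<xi> t x)) * (phi1 (\<xi> t x) * F1 (\<xi> t x) (\<eta> t x)))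
       / (phi (\<xi> t x) * phi (\<xi> t x))) (at t)"
    by (rule DERIV_divide[OF hz hp P])
  moreover have "((phi (\<xi> t x) - w1 (\<xi> t x) * F1 (\<xi> t x) (\<eta> t x)) * phi (\<xi> t x) - (\<eta> t x - w (\<xi> t x)) * (phi1 (\<xi> t x) * F1 (\<xi> t x) (\<eta> t x)))
       / (phi (\<xi> t x) * phi (\<xi> t x)) = 1 + (w1 (\<xi> t x) + sig x t * phi1 (\<xi> t x))^2"
    using P unfolding sig_def F1_def by (simp add: field_simps power2_eq_square)
  ultimately show ?thesis unfolding sig_def[abs_def] by simp
qed

lemma sig_c: "phi (\<xi> t x) \<noteq> 0 \<Longrightarrow> isCont (sig x) t"
  using sig_d by (rule DERIV_isCont)

lemma sig_mono:
  assumes "t1 \<le> t2" "\<And>t. t1 \<le> t \<Longrightarrow> t \<le> t2 \<Longrightarrow> phi (\<xi> t x) \<noteq> 0"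
  shows "sig x t2 - sig x t1 \<ge> t2 - t1"
proof (cases "t1 = t2")
  case True then show ?thesis by simp
next
  case False
  then have lt: "t1 < t2" using assms(1) by simp
  obtain z where z: "t1 < z" "z < t2" "sig x t2 - sig x t1 = (t2 - t1) * (1 + (w1 (\<xi> z x) + sig x z * phi1 (\<xi> z x))^2)"
    using MVT2[OF lt, of "sig x" "\<lambda>t. 1 + (w1 (\<xi> t x) + sig x t * phi1 (\<xi> t x))^2"] sig_d assms(2) by force
  have "(t2 - t1) * 1 \<le> (t2 - t1) * (1 + (w1 (\<xi> z x) + sig x z * phi1 (\<xi> z x))^2)"
    by (rule mult_left_mono) (use lt in auto)
  then show ?thesis using z(3) by simp
qed

end


context flow begin

lemma cw_xi: "isCont (\<lambda>t. w (\<xi> t x)) t" by (rule cxi[OF cw])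
lemma cphi_xi: "isCont (\<lambda>t. phi (\<xi> t x)) t" by (rule cxi[OF cphi])

lemma sig_cont_on:
  assumes "\<And>t. t1 \<le> t \<Longrightarrow> t \<le> t2 \<Longrightarrow> phi (\<xi> t x) \<noteq> 0"
  shows "continuous_on {t1..t2} (sig x)"
  by (rule continuous_at_imp_continuous_on) (use assms sig_c in auto)

lemma hit:
  assumes I: "a \<le> c1" "c1 < c2" "c2 \<le> b" "phi c1 = 0" "phi c2 = 0" "\<And>z. c1 < z \<Longrightarrow> z < c2 \<Longrightarrow> phi z \<noteq> 0"
    and x: "c1 < x" "x < c2" and s: "0 < s" "s \<le> 1"
  shows "\<exists>T. 0 < T \<and> T \<le> 1 \<and> c1 < \<xi> T x \<and> \<xi> T x < c2 \<and> sig x T = s \<and>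
      (\<forall>t. 0 \<le> t \<and> t < T \<longrightarrow> c1 < \<xi> t x \<and> \<xi> t x < c2 \<and> sig x t < s)"
proof -
  define A where "A = {t\<in>{0..2}. \<not>(c1 < \<xi> t x \<and> \<xi> t x < c2) \<or> \<eta> t x - w (\<xi> t x) = s * phi (\<xi> t x)}"
  have cx: "continuous_on UNIV (\<lambda>t. \<xi> t x)" by (rule continuous_at_imp_continuous_on) (use xi_c in auto)
  have cz: "continuous_on UNIV (\<lambda>t. \<eta> t x - w (\<xi> t x))"
    by (rule continuous_at_imp_continuous_on) (use eta_c cw_xi in \<open>auto intro!: continuous_intros\<close>)
  have cp: "continuous_on UNIV (\<lambda>t. s * phi (\<xi> t x))"
    by (rule continuous_at_imp_continuous_on) (use cphi_xi in \<open>auto intro!: continuous_intros\<close>)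
  have Aeq: "A = {0..2} \<inter> ({t. \<xi> t x \<le> c1} \<union> {t. c2 \<le> \<xi> t x} \<union> {t. \<eta> t x - w (\<xi> t x) = s * phi (\<xi> t x)})"
    by (auto simp: A_def)
  have clA: "closed A" unfolding Aeq
    by (intro closed_Int closed_Un closed_atLeastAtMost closed_Collect_le closed_Collect_eq cx cz cp continuous_on_const)
  have sigeq: "sig x t = s \<longleftrightarrow> \<eta> t x - w (\<xi> t x) = s * phi (\<xi> t x)" if "c1 < \<xi> t x" "\<xi> t x < c2" for t
    using I(6)[OF that] by (auto simp: sig_def field_simps)
  have Ane: "A \<noteq> {}"
  proof (cases "\<forall>t\<in>{0..2}. c1 < \<xi> t x \<and> \<xi> t x < c2")
    case True
    then have nz: "\<And>t. 0 \<le> t \<Longrightarrow> t \<le> 2 \<Longrightarrow> phi (\<xi> t x) \<noteq> 0" using I(6) by auto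
    have "sig x 2 - sig x 0 \<ge> 2 - 0" by (rule sig_mono) (use nz in auto)
    then have "sig x 0 \<le> s" "s \<le> sig x 2" using sig0 s by auto
    then obtain t where t: "0 \<le> t" "t \<le> 2" "sig x t = s"
      using IVT'[of "sig x" 0 s 2] sig_cont_on[of 0 2 x] nz by auto
    then have "t \<in> A" using True sigeq by (auto simp: A_def)
    then show ?thesis by auto
  next
    case False
    then obtain t where "t \<in> {0..2}" "\<not>(c1 < \<xi> t x \<and> \<xi> t x < c2)" by auto
    then have "t \<in> A" by (auto simp: A_def)
    then show ?thesis by auto
  qed
  have bdd: "bdd_below A" unfolding A_def by (rule bdd_belowI[of _ 0]) auto
  define \<tau> where "\<tau> = Inf A"
  have \<tau>A: "\<tau> \<in> A" unfolding \<tau>_def by (rule closed_contains_Inf[OF Ane bdd clA])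
  have \<tau>le: "\<tau> \<le> t" if "t \<in> A" for t unfolding \<tau>_def by (rule cInf_lower[OF that bdd])
  have \<tau>02: "0 \<le> \<tau>" "\<tau> \<le> 2" using \<tau>A by (auto simp: A_def)
  have before: "c1 < \<xi> t x \<and> \<xi> t x < c2 \<and> \<eta> t x - w (\<xi> t x) \<noteq> s * phi (\<xi> t x)" if "0 \<le> t" "t < \<tau>" for t
  proof -
    have "t \<notin> A" using \<tau>le that by force
    then show ?thesis using that \<tau>02 by (auto simp: A_def)
  qed
  have \<tau>pos: "0 < \<tau>"
  proof (rule ccontr)
    assume "\<not> 0 < \<tau>"
    then have "\<tau> = 0" using \<tau>02 by simp
    then have "0 \<in> A" using \<tau>A by simp
    moreover have "phi x \<noteq> 0" using I(6) x by simp
    ultimately show False using init x s by (auto simp: A_def)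
  qed
  have sig_lt: "sig x t < s" if t: "0 \<le> t" "t < \<tau>" for t
  proof (rule ccontr)
    assume "\<not> sig x t < s"
    then have "sig x 0 \<le> s" "s \<le> sig x t" using sig0 s by auto
    moreover have "continuous_on {0..t} (sig x)"
      by (rule sig_cont_on) (use before I(6) t in force)
    ultimately obtain r where r: "0 \<le> r" "r \<le> t" "sig x r = s" using IVT'[of "sig x" 0 s t] t by auto
    then show False using before[of r] sigeq[of r] t by auto
  qed
  have sig_ge: "sig x t \<ge> t" if t: "0 \<le> t" "t < \<tau>" for t
  proof -
    have "sig x t - sig x 0 \<ge> t - 0" by (rule sig_mono) (use before I(6) t in force)+
    then show ?thesis using sig0 by simp
  qed
  have in\<tau>: "c1 < \<xi> \<tau> x \<and> \<xi> \<tau> x < c2"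
  proof (rule ccontr)
    assume nin: "\<not> (c1 < \<xi> \<tau> x \<and> \<xi> \<tau> x < c2)"
    have l1: "c1 \<le> \<xi> \<tau> x"
      by (rule left_limit_le[where f="\<lambda>_. c1" and g="\<lambda>t. \<xi> t x" and \<tau>=\<tau>, OF _ xi_c \<tau>pos]) (use before[OF less_imp_le] in fastforce)+
    have l2: "\<xi> \<tau> x \<le> c2"
      by (rule left_limit_le[where f="\<lambda>t. \<xi> t x" and g="\<lambda>_. c2" and \<tau>=\<tau>, OF xi_c _ \<tau>pos]) (use before[OF less_imp_le] in fastforce)+
    have p0: "phi (\<xi> \<tau> x) = 0" using nin l1 l2 I(4,5)
      by (cases "\<xi> \<tau> x = c1") auto
    have "\<bar>\<eta> \<tau> x - w (\<xi> \<tau> x)\<bar> \<le> \<bar>phi (\<xi> \<tau> x)\<bar>"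
    proof (rule left_limit_le[where f="\<lambda>t. \<bar>\<eta> t x - w (\<xi> t x)\<bar>" and g="\<lambda>t. \<bar>phi (\<xi> t x)\<bar>" and \<tau>=\<tau>, OF _ _ \<tau>pos])
      show "isCont (\<lambda>t. \<bar>\<eta> t x - w (\<xi> t x)\<bar>) \<tau>" by (intro continuous_intros eta_c cw_xi)
      show "isCont (\<lambda>t. \<bar>phi (\<xi> t x)\<bar>) \<tau>" by (intro continuous_intros cphi_xi)
      fix t :: real assume t: "0 < t" "t < \<tau>"
      have b: "c1 < \<xi> t x" "\<xi> t x < c2" using before[of t] t by auto
      have nz: "phi (\<xi> t x) \<noteq> 0" using I(6)[OF b] .
      have e: "\<eta> t x - w (\<xi> t x) = sig x t * phi (\<xi> t x)" using nz by (simp add: sig_def)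
      have "\<bar>sig x t\<bar> \<le> 1" using sig_lt[of t] sig_ge[of t] t s by auto
      then show "\<bar>\<eta> t x - w (\<xi> t x)\<bar> \<le> \<bar>phi (\<xi> t x)\<bar>"
        unfolding e abs_mult using mult_right_mono[of "\<bar>sig x t\<bar>" 1 "\<bar>phi (\<xi> t x)\<bar>"] by simp
    qed
    then have eq: "\<eta> \<tau> x = w (\<xi> \<tau> x)" using p0 by simp
    obtain E where E: "E \<ge> 1"
  "\<And>x1 x2 t. x1\<in>{a..b} \<Longrightarrow> x2\<in>{a..b} \<Longrightarrow> 0 \<le> t \<Longrightarrow> t \<le> 2 \<Longrightarrow>
     (\<xi> t x1 - \<xi> t x2)^2 + (\<eta> t x1 - \<eta> t x2)^2 \<le> ((x1-x2)^2 + (w x1 - w x2)^2)*E"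
  "\<And>x c t. x\<in>{a..b} \<Longrightarrow> c\<in>{a..b} \<Longrightarrow> phi c = 0 \<Longrightarrow> 0 \<le> t \<Longrightarrow> t \<le> 2 \<Longrightarrow>
     (\<xi> t x - c)^2 + (\<eta> t x - w c)^2 \<le> ((x-c)^2 + (w x - w c)^2)*E"
  "\<And>x c t. x\<in>{a..b} \<Longrightarrow> c\<in>{a..b} \<Longrightarrow> phi c = 0 \<Longrightarrow> 0 \<le> t \<Longrightarrow> t \<le> 2 \<Longrightarrow>
     (x-c)^2 + (w x - w c)^2 \<le> ((\<xi> t x - c)^2 + (\<eta> t x - w c)^2)*E"
      by (rule gron) blast
    have "(x - \<xi> \<tau> x)^2 + (w x - w (\<xi> \<tau> x))^2 \<le> ((\<xi> \<tau> x - \<xi> \<tau> x)^2 + (\<eta> \<tau> x - w (\<xi> \<tau> x))^2)*E"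
      by (rule E(4)) (use I x l1 l2 p0 \<tau>02 in auto)
    then have "(x - \<xi> \<tau> x)^2 + (w x - w (\<xi> \<tau> x))^2 \<le> 0" using eq by simp
    moreover have "(x - \<xi> \<tau> x)^2 \<ge> 0" "(w x - w (\<xi> \<tau> x))^2 \<ge> 0" by simp_all
    ultimately have "(x - \<xi> \<tau> x)^2 = 0" by linarith
    then have "x = \<xi> \<tau> x" by simp
    then show False using nin x by simp
  qed
  have sig\<tau>: "sig x \<tau> = s" using \<tau>A in\<tau> sigeq by (auto simp: A_def)
  have "sig x \<tau> - sig x 0 \<ge> \<tau> - 0"
  proof (rule sig_mono)
    fix t assume t: "0 \<le> t" "t \<le> \<tau>"
    show "phi (\<xi> t x) \<noteq> 0"
    proof (cases "t = \<tau>")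
      case True then show ?thesis using in\<tau> I(6) by auto
    next
      case False then show ?thesis using before[of t] t I(6) by auto
    qed
  qed (use \<tau>02 in auto)
  then have "\<tau> \<le> 1" using sig\<tau> sig0 s by simp
  then show ?thesis using \<tau>pos in\<tau> sig\<tau> before sig_lt by blast
qed

end


context flow begin

definition "ft s x = first_time \<xi> \<eta> w phi s x"
definition "G s x = \<xi> (ft s x) x"
definition "H s x = \<eta> (ft s x) x"

lemma ft_zero:
  assumes "phi x = 0 \<or> s = 0"
  shows "ft s x = 0"
  unfolding ft_def first_time_def
  by (rule cInf_eq_minimum) (use assms init in auto)

lemma G_hit:
  assumes I: "a \<le> c1" "c1 < c2" "c2 \<le> b" "phi c1 = 0" "phi c2 = 0" "\<And>z. c1 < z \<Longrightarrow> z < c2 \<Longrightarrow> phi z \<noteq> 0"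
    and x: "c1 < x" "x < c2" and s: "0 < s" "s \<le> 1"
  shows "\<exists>T. 0 < T \<and> T \<le> 1 \<and> ft s x = T \<and> c1 < \<xi> T x \<and> \<xi> T x < c2 \<and> sig x T = s \<and>
      (\<forall>t. 0 \<le> t \<and> t < T \<longrightarrow> c1 < \<xi> t x \<and> \<xi> t x < c2 \<and> sig x t < s)"
proof -
  obtain T where T: "0 < T" "T \<le> 1" "c1 < \<xi> T x" "\<xi> T x < c2" "sig x T = s"
      "\<forall>t. 0 \<le> t \<and> t < T \<longrightarrow> c1 < \<xi> t x \<and> \<xi> t x < c2 \<and> sig x t < s"
    using hit[OF I x s] by blast
  have eqv: "sig x t = s \<longleftrightarrow> \<eta> t x = w (\<xi> t x) + s * phi (\<xi> t x)" if "c1 < \<xi> t x" "\<xi> t x < c2" for t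
    using I(6)[OF that] by (auto simp: sig_def field_simps)
  have "ft s x = T" unfolding ft_def first_time_def
  proof (rule cInf_eq_minimum)
    show "T \<in> {t. 0 \<le> t \<and> \<eta> t x = w (\<xi> t x) + s * phi (\<xi> t x)}" using T eqv by auto
    fix t assume "t \<in> {t. 0 \<le> t \<and> \<eta> t x = w (\<xi> t x) + s * phi (\<xi> t x)}"
    then have t: "0 \<le> t" "\<eta> t x = w (\<xi> t x) + s * phi (\<xi> t x)" by auto
    show "T \<le> t"
    proof (rule ccontr)
      assume "\<not> T \<le> t"
      then have "c1 < \<xi> t x" "\<xi> t x < c2" "sig x t < s" using T(6) t by auto
      then show False using eqv t by auto
    qed
  qed
  then show ?thesis using T by blast
qed

lemma interval_around:
  assumes y: "a \<le> y" "y \<le> b" "phi y \<noteq> 0"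
  obtains c1 c2 where "a \<le> c1" "c1 < y" "y < c2" "c2 \<le> b" "phi c1 = 0" "phi c2 = 0"
    "\<And>z. c1 < z \<Longrightarrow> z < c2 \<Longrightarrow> phi z \<noteq> 0"
proof -
  have py: "poly p y \<noteq> 0" using y by (simp add: phi_def ext_zero_def)
  then have "p \<noteq> 0" by auto
  then have fin: "finite {z. poly p z = 0}" by (rule poly_roots_finite)
  define Z1 where "Z1 = {z. poly p z = 0} \<inter> {a..y}"
  define Z2 where "Z2 = {z. poly p z = 0} \<inter> {y..b}"
  have f1: "finite Z1" "finite Z2" using fin by (auto simp: Z1_def Z2_def)
  have n1: "a \<in> Z1" using pvan y by (auto simp: Z1_def)
  have n2: "b \<in> Z2" using pvan y by (auto simp: Z2_def)
  define c1 where "c1 = Max Z1"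
  define c2 where "c2 = Min Z2"
  have c1Z: "c1 \<in> Z1" unfolding c1_def using f1 n1 by (intro Max_in) auto
  have c2Z: "c2 \<in> Z2" unfolding c2_def using f1 n2 by (intro Min_in) auto
  have c1ge: "z \<le> c1" if "z \<in> Z1" for z unfolding c1_def using f1 that by simp
  have c2le: "c2 \<le> z" if "z \<in> Z2" for z unfolding c2_def using f1 that by simp
  have c1y: "c1 < y" using c1Z py by (auto simp: Z1_def) (metis order.order_iff_strict)
  have c2y: "y < c2" using c2Z py by (auto simp: Z2_def) (metis order.order_iff_strict)
  show ?thesis
  proof (rule that[of c1 c2])
    show "a \<le> c1" using c1ge n1 by simp
    show "c2 \<le> b" using c2le n2 by simp
    show "c1 < y" "y < c2" by (fact c1y, fact c2y)
    show "phi c1 = 0" using c1Z by (auto simp: Z1_def phi_def ext_zero_def)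
    show "phi c2 = 0" using c2Z by (auto simp: Z2_def phi_def ext_zero_def)
    fix z assume z: "c1 < z" "z < c2"
    have zab: "a \<le> z" "z \<le> b" using z \<open>a \<le> c1\<close> \<open>c2 \<le> b\<close> by auto
    show "phi z \<noteq> 0"
    proof
      assume "phi z = 0"
      then have pz: "poly p z = 0" using zab by (simp add: phi_def ext_zero_def)
      show False
      proof (cases "z \<le> y")
        case True then have "z \<in> Z1" using pz zab by (simp add: Z1_def)
        then show False using c1ge z by force
      next
        case False then have "z \<in> Z2" using pz zab by (simp add: Z2_def)
        then show False using c2le z by force
      qed
    qed
  qed
qed

lemma gronE:
  obtains E where "E \<ge> 1"
  "\<And>x1 x2 t. x1\<in>{a..b} \<Longrightarrow> x2\<in>{a..b} \<Longrightarrow> 0 \<le> t \<Longrightarrow> t \<le> 2 \<Longrightarrow>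
     (\<xi> t x1 - \<xi> t x2)^2 + (\<eta> t x1 - \<eta> t x2)^2 \<le> ((x1-x2)^2 + (w x1 - w x2)^2)*E"
  "\<And>x c t. x\<in>{a..b} \<Longrightarrow> c\<in>{a..b} \<Longrightarrow> phi c = 0 \<Longrightarrow> 0 \<le> t \<Longrightarrow> t \<le> 2 \<Longrightarrow>
     (\<xi> t x - c)^2 + (\<eta> t x - w c)^2 \<le> ((x-c)^2 + (w x - w c)^2)*E"
  by (rule gron) blast

lemma sq_bound: "(u::real)^2 + v^2 \<le> B \<Longrightarrow> \<bar>u\<bar> \<le> sqrt B \<and> \<bar>v\<bar> \<le> sqrt B"
proof -
  assume h: "u^2 + v^2 \<le> B"
  have "u^2 \<le> B" using h zero_le_power2[of v] by linarith
  moreover have "v^2 \<le> B" using h zero_le_power2[of u] by linarith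
  ultimately
  show ?thesis using real_sqrt_le_mono real_sqrt_abs by metis
qed

lemma traj_cont:
  assumes x0: "a < x0" "x0 < b" and t: "0 \<le> t" "t \<le> 2"
  shows "((\<lambda>x. \<xi> t x) \<longlongrightarrow> \<xi> t x0) (at x0)" "((\<lambda>x. \<eta> t x) \<longlongrightarrow> \<eta> t x0) (at x0)"
proof -
  obtain E where E: "E \<ge> 1"
    "\<And>x1 x2 t. x1\<in>{a..b} \<Longrightarrow> x2\<in>{a..b} \<Longrightarrow> 0 \<le> t \<Longrightarrow> t \<le> 2 \<Longrightarrow>
     (\<xi> t x1 - \<xi> t x2)^2 + (\<eta> t x1 - \<eta> t x2)^2 \<le> ((x1-x2)^2 + (w x1 - w x2)^2)*E"
    by (rule gronE) blast
  define B where "B x = sqrt (((x-x0)^2 + (w x - w x0)^2)*E)" for x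
  have Bc: "isCont B x0" unfolding B_def by (intro continuous_intros cw)
  then have Bl: "(B \<longlongrightarrow> 0) (at x0)" unfolding isCont_def B_def by simp
  have ev: "eventually (\<lambda>x. a < x \<and> x < b) (at x0)"
  proof -
    have "eventually (\<lambda>x. a < x \<and> x < b) (at_left x0)"
      using eventually_at_left_real[OF x0(1)] by (rule eventually_mono) (use x0 in auto)
    moreover have "eventually (\<lambda>x. a < x \<and> x < b) (at_right x0)"
      using eventually_at_right_real[OF x0(2)] by (rule eventually_mono) (use x0 in auto)
    ultimately show ?thesis unfolding eventually_at_split by auto
  qed
  have bd: "eventually (\<lambda>x. \<bar>\<xi> t x - \<xi> t x0\<bar> \<le> B x \<and> \<bar>\<eta> t x - \<eta> t x0\<bar> \<le> B x) (at x0)"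
    using ev
  proof eventually_elim
    case (elim x)
    then show ?case unfolding B_def using sq_bound[OF E(2)[of x x0 t]] x0 t by auto
  qed
  show "((\<lambda>x. \<xi> t x) \<longlongrightarrow> \<xi> t x0) (at x0)"
    by (rule LIM_zero_cancel, rule Lim_null_comparison[OF _ Bl]) (use bd in \<open>auto elim: eventually_mono\<close>)
  show "((\<lambda>x. \<eta> t x) \<longlongrightarrow> \<eta> t x0) (at x0)"
    by (rule LIM_zero_cancel, rule Lim_null_comparison[OF _ Bl]) (use bd in \<open>auto elim: eventually_mono\<close>)
qed

end


context flow begin

lemma sig_tendsto:
  assumes x0: "a < x0" "x0 < b" and t: "0 \<le> t" "t \<le> 2" and nz: "phi (\<xi> t x0) \<noteq> 0"
  shows "((\<lambda>x. sig x t) \<longlongrightarrow> sig x0 t) (at x0)"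
proof -
  have l1: "((\<lambda>x. \<xi> t x) \<longlongrightarrow> \<xi> t x0) (at x0)" and l2: "((\<lambda>x. \<eta> t x) \<longlongrightarrow> \<eta> t x0) (at x0)"
    using traj_cont[OF x0 t] by auto
  have l3: "((\<lambda>x. w (\<xi> t x)) \<longlongrightarrow> w (\<xi> t x0)) (at x0)" by (rule isCont_tendsto_compose[OF cw l1])
  have l4: "((\<lambda>x. phi (\<xi> t x)) \<longlongrightarrow> phi (\<xi> t x0)) (at x0)" by (rule isCont_tendsto_compose[OF cphi l1])
  show ?thesis unfolding sig_def by (intro tendsto_intros l2 l3 l4 nz)
qed

lemma unif_close:
  assumes x0: "a < x0" "x0 < b" and r: "r > 0"
  shows "eventually (\<lambda>x. \<forall>t. 0 \<le> t \<and> t \<le> 2 \<longrightarrow> \<bar>\<xi> t x - \<xi> t x0\<bar> < r) (at x0)"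
proof -
  obtain E where E: "E \<ge> 1"
    "\<And>x1 x2 t. x1\<in>{a..b} \<Longrightarrow> x2\<in>{a..b} \<Longrightarrow> 0 \<le> t \<Longrightarrow> t \<le> 2 \<Longrightarrow>
     (\<xi> t x1 - \<xi> t x2)^2 + (\<eta> t x1 - \<eta> t x2)^2 \<le> ((x1-x2)^2 + (w x1 - w x2)^2)*E"
    by (rule gronE) blast
  define B where "B x = sqrt (((x-x0)^2 + (w x - w x0)^2)*E)" for x
  have Bc: "isCont B x0" unfolding B_def by (intro continuous_intros cw)
  then have Bl: "(B \<longlongrightarrow> 0) (at x0)" unfolding isCont_def B_def by simp
  have ev1: "eventually (\<lambda>x. B x < r) (at x0)" using order_tendstoD(2)[OF Bl r] .
  have ev: "eventually (\<lambda>x. a < x \<and> x < b) (at x0)"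
  proof -
    have "eventually (\<lambda>x. a < x \<and> x < b) (at_left x0)"
      using eventually_at_left_real[OF x0(1)] by (rule eventually_mono) (use x0 in auto)
    moreover have "eventually (\<lambda>x. a < x \<and> x < b) (at_right x0)"
      using eventually_at_right_real[OF x0(2)] by (rule eventually_mono) (use x0 in auto)
    ultimately show ?thesis unfolding eventually_at_split by auto
  qed
  show ?thesis using ev ev1
  proof eventually_elim
    case (elim x)
    show ?case
    proof (intro allI impI)
      fix t :: real assume t: "0 \<le> t \<and> t \<le> 2"
      have "\<bar>\<xi> t x - \<xi> t x0\<bar> \<le> B x" unfolding B_def using sq_bound[OF E(2)[of x x0 t]] x0 t elim by auto
      then show "\<bar>\<xi> t x - \<xi> t x0\<bar> < r" using elim by simp
    qed
  qed
qed

lemma ev_in: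
  fixes x0 c1 c2 :: real
  assumes "c1 < x0" "x0 < c2"
  shows "eventually (\<lambda>x. c1 < x \<and> x < c2) (at x0)"
proof -
  have "eventually (\<lambda>x. c1 < x \<and> x < c2) (at_left x0)"
    using eventually_at_left_real[OF assms(1)] by (rule eventually_mono) (use assms in auto)
  moreover have "eventually (\<lambda>x. c1 < x \<and> x < c2) (at_right x0)"
    using eventually_at_right_real[OF assms(2)] by (rule eventually_mono) (use assms in auto)
  ultimately show ?thesis unfolding eventually_at_split by auto
qed

lemma G_int:
  assumes I: "a \<le> c1" "c1 < c2" "c2 \<le> b" "phi c1 = 0" "phi c2 = 0" "\<And>z. c1 < z \<Longrightarrow> z < c2 \<Longrightarrow> phi z \<noteq> 0"
    and x0: "c1 < x0" "x0 < c2" and s: "0 < s" "s \<le> 1"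
  shows "isCont (G s) x0"
proof -
  obtain T0 where T0: "0 < T0" "T0 \<le> 1" "ft s x0 = T0" "c1 < \<xi> T0 x0" "\<xi> T0 x0 < c2" "sig x0 T0 = s"
    and before0: "\<forall>t. 0 \<le> t \<and> t < T0 \<longrightarrow> c1 < \<xi> t x0 \<and> \<xi> t x0 < c2 \<and> sig x0 t < s"
    using G_hit[OF I x0 s] by blast
  have Gx0: "G s x0 = \<xi> T0 x0" by (simp add: G_def T0(3))
  have x0ab: "a < x0" "x0 < b" using I x0 by auto
  have lim0: "((\<lambda>t. \<xi> t x0) \<longlongrightarrow> \<xi> T0 x0) (at T0)" using xi_c unfolding isCont_def by blast
  have "eventually (\<lambda>t. c1 < \<xi> t x0 \<and> \<xi> t x0 < c2) (at T0)"
    using order_tendstoD(1)[OF lim0 T0(4)] order_tendstoD(2)[OF lim0 T0(5)] by (rule eventually_conj)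
  then obtain \<delta> where \<delta>: "\<delta> > 0" "\<And>t. t \<noteq> T0 \<Longrightarrow> dist t T0 < \<delta> \<Longrightarrow> c1 < \<xi> t x0 \<and> \<xi> t x0 < c2"
    unfolding eventually_at by auto
  define \<eta>0 where "\<eta>0 = min (\<delta>/2) 1"
  have \<eta>0: "\<eta>0 > 0" "\<eta>0 \<le> 1" "\<eta>0 < \<delta>" using \<delta> by (auto simp: \<eta>0_def)
  have ext: "c1 < \<xi> t x0 \<and> \<xi> t x0 < c2" if "0 \<le> t" "t \<le> T0 + \<eta>0" for t
  proof -
    consider "t < T0" | "t = T0" | "T0 < t" by linarith
    then show ?thesis
    proof cases
      case 1 then show ?thesis using before0 that by auto
    next
      case 2 then show ?thesis using T0 by auto
    next
      case 3 then show ?thesis using \<delta>(2)[of t] that \<eta>0 by (auto simp: dist_real_def)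
    qed
  qed
  define f where "f t = min (\<xi> t x0 - c1) (c2 - \<xi> t x0)" for t
  have fc: "continuous_on {0..T0+\<eta>0} f" unfolding f_def
    by (rule continuous_at_imp_continuous_on) (auto intro!: continuous_intros xi_c)
  obtain tm where tm: "tm \<in> {0..T0+\<eta>0}" "\<And>t. t \<in> {0..T0+\<eta>0} \<Longrightarrow> f tm \<le> f t"
    using continuous_attains_inf[OF compact_Icc _ fc] T0 \<eta>0 by auto
  define d where "d = f tm"
  have d: "d > 0" using ext[of tm] tm(1) by (auto simp: d_def f_def)
  have margin: "c1 + d \<le> \<xi> t x0 \<and> \<xi> t x0 \<le> c2 - d" if "0 \<le> t" "t \<le> T0 + \<eta>0" for t
    using tm(2)[of t] that by (auto simp: d_def f_def)
  show ?thesis unfolding isCont_def tendsto_iff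
  proof (intro allI impI)
    fix \<epsilon> :: real assume \<epsilon>: "\<epsilon> > 0"
    obtain \<delta>' where \<delta>': "\<delta>' > 0" "\<And>t. t \<noteq> T0 \<Longrightarrow> dist t T0 < \<delta>' \<Longrightarrow> dist (\<xi> t x0) (\<xi> T0 x0) < \<epsilon>/2"
      using lim0[unfolded tendsto_iff, rule_format, of "\<epsilon>/2"] \<epsilon> unfolding eventually_at by auto
    define e where "e = min (\<delta>'/2) (min \<eta>0 (T0/2))"
    have e: "e > 0" "e \<le> \<eta>0" "e < T0" "e < \<delta>'" using \<delta>' \<eta>0 T0 by (auto simp: e_def)
    have near: "\<bar>\<xi> t x0 - \<xi> T0 x0\<bar> < \<epsilon>/2" if "\<bar>t - T0\<bar> \<le> e" for t
    proof (cases "t = T0")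
      case True then show ?thesis using \<epsilon> by simp
    next
      case False then show ?thesis using \<delta>'(2)[of t] that e by (auto simp: dist_real_def)
    qed
    have nz0: "phi (\<xi> t x0) \<noteq> 0" if "0 \<le> t" "t \<le> T0 + \<eta>0" for t using ext[OF that] I(6) by auto
    have s1: "sig x0 T0 - sig x0 (T0 - e) \<ge> T0 - (T0 - e)"
      by (rule sig_mono) (use nz0 e \<eta>0 in auto)
    have s2: "sig x0 (T0 + e) - sig x0 T0 \<ge> (T0 + e) - T0"
      by (rule sig_mono) (use nz0 e \<eta>0 in auto)
    have sa: "sig x0 (T0 - e) < s" using s1 T0(6) e by simp
    have sb: "s < sig x0 (T0 + e)" using s2 T0(6) e by simp
    have ev1: "eventually (\<lambda>x. sig x (T0 - e) < s) (at x0)"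
      by (rule order_tendstoD(2)[OF sig_tendsto[OF x0ab] sa]) (use e T0 \<eta>0 nz0 in auto)
    have ev2: "eventually (\<lambda>x. s < sig x (T0 + e)) (at x0)"
      by (rule order_tendstoD(1)[OF sig_tendsto[OF x0ab] sb]) (use e T0 \<eta>0 nz0 in auto)
    have ev3: "eventually (\<lambda>x. \<forall>t. 0 \<le> t \<and> t \<le> 2 \<longrightarrow> \<bar>\<xi> t x - \<xi> t x0\<bar> < min d (\<epsilon>/2)) (at x0)"
      by (rule unif_close[OF x0ab]) (use d \<epsilon> in auto)
    show "eventually (\<lambda>x. dist (G s x) (G s x0) < \<epsilon>) (at x0)"
      using ev_in[OF x0] ev1 ev2 ev3
    proof eventually_elim
      case (elim x)
      have xin: "c1 < x" "x < c2" using elim by auto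
      have in_x: "c1 < \<xi> t x \<and> \<xi> t x < c2" if "0 \<le> t" "t \<le> T0 + e" for t
      proof -
        have "\<bar>\<xi> t x - \<xi> t x0\<bar> < d" using elim(4) that e T0 \<eta>0 by auto
        moreover have "c1 + d \<le> \<xi> t x0 \<and> \<xi> t x0 \<le> c2 - d" using margin[of t] that e by auto
        ultimately show ?thesis by auto
      qed
      obtain T where T: "0 < T" "T \<le> 1" "ft s x = T" "sig x T = s"
        and bef: "\<forall>t. 0 \<le> t \<and> t < T \<longrightarrow> c1 < \<xi> t x \<and> \<xi> t x < c2 \<and> sig x t < s"
        using G_hit[OF I xin s] by blast
      have Tlt: "T < T0 + e"
      proof (rule ccontr)
        assume "\<not> T < T0 + e"
        then consider "T0 + e < T" | "T = T0 + e" by linarith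
        then show False
        proof cases
          case 1
          then have "sig x (T0 + e) < s" using bef[rule_format, of "T0+e"] e T0 by auto
          then show False using elim(3) by simp
        next
          case 2 then show False using elim(3) T(4) by simp
        qed
      qed
      have Tgt: "T0 - e < T"
      proof (rule ccontr)
        assume "\<not> T0 - e < T"
        then have le: "T \<le> T0 - e" by simp
        have "sig x (T0 - e) - sig x T \<ge> (T0 - e) - T"
          by (rule sig_mono[OF le]) (use in_x I(6) T e in force)
        then show False using elim(2) T(4) le by simp
      qed
      have "\<bar>\<xi> T x - \<xi> T x0\<bar> < \<epsilon>/2" using elim(4) T by auto
      moreover have "\<bar>\<xi> T x0 - \<xi> T0 x0\<bar> < \<epsilon>/2" by (rule near) (use Tlt Tgt in auto)
      ultimately show ?case unfolding G_def T(3) T0(3) dist_real_def by linarith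
    qed
  qed
qed

end


context flow begin

lemma G_zero: "phi x = 0 \<or> s = 0 \<Longrightarrow> G s x = x \<and> H s x = w x"
  using ft_zero[of x s] init by (simp add: G_def H_def)

lemma G_end:
  assumes I: "a \<le> c1" "c1 < c2" "c2 \<le> b" "phi c1 = 0" "phi c2 = 0" "\<And>z. c1 < z \<Longrightarrow> z < c2 \<Longrightarrow> phi z \<noteq> 0"
    and s: "0 < s" "s \<le> 1" and c: "c = c1 \<or> c = c2"
  shows "continuous (at c within {c1..c2}) (G s)"
proof -
  have pc: "phi c = 0" using c I by auto
  have cab: "c \<in> {a..b}" using c I by auto
  have Gc: "G s c = c" using G_zero[of c s] pc by simp
  obtain E where E: "E \<ge> 1"
  "\<And>x1 x2 t. x1\<in>{a..b} \<Longrightarrow> x2\<in>{a..b} \<Longrightarrow> 0 \<le> t \<Longrightarrow> t \<le> 2 \<Longrightarrow>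
     (\<xi> t x1 - \<xi> t x2)^2 + (\<eta> t x1 - \<eta> t x2)^2 \<le> ((x1-x2)^2 + (w x1 - w x2)^2)*E"
  "\<And>x c t. x\<in>{a..b} \<Longrightarrow> c\<in>{a..b} \<Longrightarrow> phi c = 0 \<Longrightarrow> 0 \<le> t \<Longrightarrow> t \<le> 2 \<Longrightarrow>
     (\<xi> t x - c)^2 + (\<eta> t x - w c)^2 \<le> ((x-c)^2 + (w x - w c)^2)*E"
    by (rule gronE) blast
  define B where "B x = sqrt (((x-c)^2 + (w x - w c)^2)*E)" for x
  have Bc: "isCont B c" unfolding B_def by (intro continuous_intros cw)
  then have "continuous (at c within {c1..c2}) B" by (rule continuous_at_imp_continuous_within)
  then have Bl: "(B \<longlongrightarrow> 0) (at c within {c1..c2})" unfolding continuous_within B_def by simp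
  have ev: "eventually (\<lambda>x. c1 < x \<and> x < c2) (at c within {c1..c2})"
    unfolding eventually_at using I c by (intro exI[of _ "c2 - c1"]) (auto simp: dist_real_def)
  have bd: "eventually (\<lambda>x. norm (G s x - c) \<le> B x) (at c within {c1..c2})"
    using ev
  proof eventually_elim
    case (elim x)
    then have xin: "c1 < x" "x < c2" by auto
    obtain T where T: "0 < T" "T \<le> 1" "ft s x = T"
      using G_hit[OF I xin s] by blast
    have "\<bar>\<xi> T x - c\<bar> \<le> B x" unfolding B_def
      using sq_bound[OF E(3)[of x c T]] xin I cab pc T by auto
    then show ?case by (simp add: G_def T(3))
  qed
  have "((\<lambda>x. G s x - c) \<longlongrightarrow> 0) (at c within {c1..c2})"
    by (rule Lim_null_comparison[OF bd Bl])
  then have "(G s \<longlongrightarrow> c) (at c within {c1..c2})" by (rule LIM_zero_cancel)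
  then show ?thesis unfolding continuous_within Gc .
qed

lemma G_cont_on:
  assumes I: "a \<le> c1" "c1 < c2" "c2 \<le> b" "phi c1 = 0" "phi c2 = 0" "\<And>z. c1 < z \<Longrightarrow> z < c2 \<Longrightarrow> phi z \<noteq> 0"
    and s: "0 < s" "s \<le> 1"
  shows "continuous_on {c1..c2} (G s)"
  unfolding continuous_on_eq_continuous_within
proof
  fix x assume x: "x \<in> {c1..c2}"
  show "continuous (at x within {c1..c2}) (G s)"
  proof (cases "x = c1 \<or> x = c2")
    case True show ?thesis by (rule G_end[OF I s True])
  next
    case False
    then have xi: "c1 < x" "x < c2" using x by auto
    show ?thesis by (rule continuous_at_imp_continuous_within[OF G_int[OF I xi s]])
  qed
qed

lemma hitpoint:
  assumes I: "a \<le> c1" "c1 < c2" "c2 \<le> b" "phi c1 = 0" "phi c2 = 0" "\<And>z. c1 < z \<Longrightarrow> z < c2 \<Longrightarrow> phi z \<noteq> 0"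
    and x: "c1 < x" "x < c2" and s: "0 < s" "s \<le> 1"
  shows "c1 < G s x \<and> G s x < c2 \<and> H s x = w (G s x) + s * phi (G s x)"
proof -
  obtain T where T: "ft s x = T" "c1 < \<xi> T x" "\<xi> T x < c2" "sig x T = s"
    using G_hit[OF I x s] by blast
  have "phi (\<xi> T x) \<noteq> 0" using I(6) T by auto
  then have "\<eta> T x = w (\<xi> T x) + s * phi (\<xi> T x)" using T(4) by (auto simp: sig_def field_simps)
  then show ?thesis using T by (simp add: G_def H_def)
qed

lemma main:
  assumes s: "s \<in> {0..1}"
  shows "(\<lambda>x. (G s x, H s x)) ` {a..b} = (\<lambda>x. (x, w x + s * phi x)) ` {a..b}"
proof (cases "s = 0")
  case True
  then show ?thesis using G_zero by (auto intro!: image_cong)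
next
  case False
  then have s': "0 < s" "s \<le> 1" using s by auto
  show ?thesis
  proof
    show "(\<lambda>x. (G s x, H s x)) ` {a..b} \<subseteq> (\<lambda>x. (x, w x + s * phi x)) ` {a..b}"
    proof
      fix q assume "q \<in> (\<lambda>x. (G s x, H s x)) ` {a..b}"
      then obtain x where x: "x \<in> {a..b}" "q = (G s x, H s x)" by auto
      show "q \<in> (\<lambda>x. (x, w x + s * phi x)) ` {a..b}"
      proof (cases "phi x = 0")
        case True
        then show ?thesis using G_zero[of x s] x by (intro image_eqI[of _ _ x]) auto
      next
        case False
        obtain c1 c2 where I: "a \<le> c1" "c1 < x" "x < c2" "c2 \<le> b" "phi c1 = 0" "phi c2 = 0"
          "\<And>z. c1 < z \<Longrightarrow> z < c2 \<Longrightarrow> phi z \<noteq> 0"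
          using interval_around[of x] x False by auto
        have "c1 < G s x \<and> G s x < c2 \<and> H s x = w (G s x) + s * phi (G s x)"
          by (rule hitpoint) (use I s' in auto)
        then show ?thesis using x I by (intro image_eqI[of _ _ "G s x"]) auto
      qed
    qed
  next
    show "(\<lambda>x. (x, w x + s * phi x)) ` {a..b} \<subseteq> (\<lambda>x. (G s x, H s x)) ` {a..b}"
    proof
      fix q assume "q \<in> (\<lambda>x. (x, w x + s * phi x)) ` {a..b}"
      then obtain y where y: "y \<in> {a..b}" "q = (y, w y + s * phi y)" by auto
      show "q \<in> (\<lambda>x. (G s x, H s x)) ` {a..b}"
      proof (cases "phi y = 0")
        case True
        then show ?thesis using G_zero[of y s] y by (intro image_eqI[of _ _ y]) auto
      next
        case False
        obtain c1 c2 where I: "a \<le> c1" "c1 < y" "y < c2" "c2 \<le> b" "phi c1 = 0" "phi c2 = 0"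
          "\<And>z. c1 < z \<Longrightarrow> z < c2 \<Longrightarrow> phi z \<noteq> 0"
          using interval_around[of y] y False by auto
        have I': "a \<le> c1" "c1 < c2" "c2 \<le> b" "phi c1 = 0" "phi c2 = 0" "\<And>z. c1 < z \<Longrightarrow> z < c2 \<Longrightarrow> phi z \<noteq> 0"
          using I by auto
        have e1: "G s c1 = c1" "G s c2 = c2" using G_zero I by auto
        obtain x where x: "c1 \<le> x" "x \<le> c2" "G s x = y"
          using IVT'[of "G s" c1 y c2] e1 I G_cont_on[OF I' s'] by auto
        have xin: "c1 < x" "x < c2" using x e1 I by (auto simp: order.order_iff_strict)
        have h: "c1 < G s x \<and> G s x < c2 \<and> H s x = w (G s x) + s * phi (G s x)"
          by (rule hitpoint[OF I' xin s'])
        show ?thesis using h x y I by (intro image_eqI[of _ _ x]) auto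
      qed
    qed
  qed
qed

end


theorem theorem3p6:
  fixes w :: "real \<Rightarrow> real" and p :: "real poly" and a b :: real
    and \<xi> \<eta> :: "real \<Rightarrow> real \<Rightarrow> real" and s :: real
  assumes w_C3: "C_k 3 w"
    and w_per: "periodic_fun w"
    and w_pos: "\<forall>x\<in>{-1..1}. w x > 0"
    and ab: "-1 < a" "a < b" "b < 1"
    and p_a: "\<forall>k\<le>3. poly ((pderiv ^^ k) p) a = 0"
    and p_b: "\<forall>k\<le>3. poly ((pderiv ^^ k) p) b = 0"
    and xi_ode: "\<forall>x t. ((\<lambda>t. \<xi> t x) has_real_derivative
          (- deriv w (\<xi> t x) * ext_zero p a b (\<xi> t x)
           - (\<eta> t x - w (\<xi> t x)) * deriv (ext_zero p a b) (\<xi> t x))) (at t)"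
    and eta_ode: "\<forall>x t. ((\<lambda>t. \<eta> t x) has_real_derivative ext_zero p a b (\<xi> t x)) (at t)"
    and init: "\<forall>x. \<xi> 0 x = x \<and> \<eta> 0 x = w x"
    and s: "s \<in> {0..1}"
  shows "(\<lambda>x. (\<xi> (first_time \<xi> \<eta> w (ext_zero p a b) s x) x,
               \<eta> (first_time \<xi> \<eta> w (ext_zero p a b) s x) x)) ` {a..b}
         = (\<lambda>x. (x, w x + s * ext_zero p a b x)) ` {a..b}"
proof -
  interpret flow w p a b \<xi> \<eta>
    unfolding flow_def by (intro conjI w_C3 ab p_a p_b xi_ode eta_ode init)
  have e1: "(\<lambda>x. (\<xi> (first_time \<xi> \<eta> w (ext_zero p a b) s x) x,
               \<eta> (first_time \<xi> \<eta> w (ext_zero p a b) s x) x)) = (\<lambda>x. (G s x, H s x))"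
    by (simp add: G_def H_def ft_def phi_def)
  have e2: "(\<lambda>x. (x, w x + s * ext_zero p a b x)) = (\<lambda>x. (x, w x + s * phi x))"
    by (simp add: phi_def)
  show ?thesis unfolding e1 e2 by (rule main[OF s])
qed

end
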